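(* Let $n\ge 7$ and let $G$ be a bicyclic graph on $n$ vertices. (1) $\mathrm{irr}_t(G)\ge 2n-4$. Equality holds if and only if the degree sequence of $G$ is $(3,3,2,\ldots,2)$, i.e. two vertices of degree $3$ and $n-2$ of degree $2$. (2) If the degree sequence of $G$ is not $(3,3,2,\ldots,2)$, then $\mathrm{irr}_t(G)\ge 2n-2$. Equality holds if and only if the degree sequence of $G$ is $(4,2,\ldots,2)$, i.e. one vertex of degree $4$ and $n-1$ of degree $2$. (3) If the degree sequence of $G$ is neither $(3,3,2,\ldots,2)$ nor $(4,2,\ldots,2)$, then $\mathrm{irr}_t(G)\ge 4n-10$. Equality holds if and only if the degree sequence of $G$ is $(3,3,3,2,\ldots,2,1)$, i.e. three vertices of degree $3$, $n-4$ of degree $2$ and one of degree $1$.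
   Context: A bicyclic graph is a simple connected graph whose number of edges equals its number of vertices plus one. For a graph $G=(V,E)$ and $w\in V$, $d_G(w)$ is the degree of $w$. The total irregularity is $\mathrm{irr}_t(G)=\frac12\sum_{x,y\in V}|d_G(x)-d_G(y)|$, where the sum runs over all ordered pairs of vertices. Degree sequences are listed in nonincreasing order. *)

theory Defs
  imports Complex_Main "HOL-Library.Multiset"
begin

definition simple_graph :: "'a set \<Rightarrow> 'a set set \<Rightarrow> bool" where
  "simple_graph V E \<longleftrightarrow> finite V \<and> (\<forall>e\<in>E. e \<subseteq> V \<and> card e = 2)"

definition adj_rel :: "'a set set \<Rightarrow> ('a \<times> 'a) set" where
  "adj_rel E = {(x, y). {x, y} \<in> E}"

definition connected_graph :: "'a set \<Rightarrow> 'a set set \<Rightarrow> bool" where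
  "connected_graph V E \<longleftrightarrow> V \<noteq> {} \<and> (\<forall>u\<in>V. \<forall>v\<in>V. (u, v) \<in> (adj_rel E)\<^sup>*)"

definition bicyclic :: "'a set \<Rightarrow> 'a set set \<Rightarrow> bool" where
  "bicyclic V E \<longleftrightarrow> simple_graph V E \<and> connected_graph V E \<and> card E = card V + 1"

definition degree :: "'a set set \<Rightarrow> 'a \<Rightarrow> nat" where
  "degree E v = card {e\<in>E. v \<in> e}"

definition total_irr :: "'a set \<Rightarrow> 'a set set \<Rightarrow> real" where
  "total_irr V E = (1/2) * (\<Sum>x\<in>V. \<Sum>y\<in>V. \<bar>real (degree E x) - real (degree E y)\<bar>)"

text \<open>Degree sequence, as a multiset of degrees (order-free form of the
  nonincreasing list).\<close>
definition degree_seq :: "'a set \<Rightarrow> 'a set set \<Rightarrow> nat multiset" where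
  "degree_seq V E = image_mset (degree E) (mset_set V)"

end

theory Submission
  imports Defs
begin


lemma count_degseq:
  assumes "finite V"
  shows "count (image_mset d (mset_set V)) k = card {v\<in>V. d v = k}"
proof -
  have "count (image_mset d (mset_set V)) k = (\<Sum>y\<in>d -` {k} \<inter> V. 1)"
    using assms by (simp add: count_image_mset)
  also have "\<dots> = card {v\<in>V. d v = k}"
    by (simp add: Int_commute vimage_def Collect_conj_eq)
  finally show ?thesis .
qed

lemma handshake:
  assumes "finite V" "\<forall>e\<in>E. e \<subseteq> V \<and> card e = 2"
  shows "(\<Sum>v\<in>V. degree E v) = 2 * card E"
proof -
  have fE: "finite E" using assms by (meson Pow_iff finite_Pow_iff rev_finite_subset subsetI)
  have "(\<Sum>v\<in>V. degree E v) = (\<Sum>v\<in>V. \<Sum>e\<in>E. if v \<in> e then 1 else 0)"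
    unfolding degree_def using fE by (simp add: sum.If_cases Int_def)
  also have "\<dots> = (\<Sum>e\<in>E. \<Sum>v\<in>V. if v \<in> e then 1 else 0)" by (rule sum.swap)
  also have "\<dots> = (\<Sum>e\<in>E. card e)"
  proof (rule sum.cong[OF refl])
    fix e assume "e \<in> E"
    then have "e \<subseteq> V" using assms by auto
    then show "(\<Sum>v\<in>V. if v \<in> e then 1 else 0) = card e"
      using assms(1) by (simp add: sum.If_cases Int_absorb1 Int_commute Int_def[symmetric])
  qed
  also have "\<dots> = (\<Sum>e\<in>E. 2)" using assms by (intro sum.cong) auto
  finally show ?thesis by simp
qed

lemma degree_pos:
  assumes "bicyclic V E" "card V \<ge> 2" "v \<in> V"
  shows "degree E v \<ge> 1"
proof -
  have fin: "finite V" using assms(1) unfolding bicyclic_def simple_graph_def by auto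
  have fE: "finite E" using assms(1) unfolding bicyclic_def simple_graph_def
    by (meson Pow_iff finite_Pow_iff rev_finite_subset subsetI)
  obtain u where u: "u \<in> V" "u \<noteq> v"
  proof -
    have "card (V - {v}) \<ge> 1" using assms(2,3) fin by simp
    then have "V - {v} \<noteq> {}" by (metis card.empty not_one_le_zero)
    then show ?thesis using that by blast
  qed
  have "(v, u) \<in> (adj_rel E)\<^sup>*" using assms(1) u assms(3)
    unfolding bicyclic_def connected_graph_def by auto
  then obtain w where "(v, w) \<in> adj_rel E" using u(2)
    by (metis converse_rtranclE)
  then have "{v, w} \<in> {e\<in>E. v \<in> e}" unfolding adj_rel_def by auto
  then have "{e\<in>E. v \<in> e} \<noteq> {}" by blast
  then show ?thesis unfolding degree_def using fE
    by (simp add: Suc_leI card_gt_0_iff)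
qed



lemma core_formula:
  fixes V :: "'a set" and d :: "'a \<Rightarrow> nat"
  assumes fin: "finite V" and pos: "\<forall>v\<in>V. d v \<ge> 1"
    and sumd: "(\<Sum>v\<in>V. d v) = 2 * card V + 2"
  defines "L \<equiv> {v\<in>V. d v = 1}" and "T \<equiv> {v\<in>V. d v = 2}" and "H \<equiv> {v\<in>V. d v \<ge> 3}"
  shows "card V = card L + card T + card H"
    and "(\<Sum>v\<in>H. d v) = card L + 2 * card H + 2"
    and "(\<Sum>x\<in>V. \<Sum>y\<in>V. \<bar>real (d x) - real (d y)\<bar>) =
          2 * real (card L * card T + card L * (card L + card H + 2) + card T * (card L + 2))
          + (\<Sum>x\<in>H. \<Sum>y\<in>H. \<bar>real (d x) - real (d y)\<bar>)"
proof -
  have fL: "finite L" and fT: "finite T" and fH: "finite H" using fin by (auto simp: L_def T_def H_def)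
  have VU: "V = L \<union> (T \<union> H)" using pos by (auto simp: L_def T_def H_def)
  have d1: "L \<inter> (T \<union> H) = {}" and d2: "T \<inter> H = {}" by (auto simp: L_def T_def H_def)
  have split: "\<And>f::'a\<Rightarrow>'b::comm_monoid_add. sum f V = sum f L + sum f T + sum f H"
  proof -
    fix f :: "'a\<Rightarrow>'b::comm_monoid_add"
    have "sum f V = sum f L + sum f (T \<union> H)" using VU d1 fL fT fH
      by (metis finite_UnI sum.union_disjoint)
    also have "sum f (T \<union> H) = sum f T + sum f H" by (rule sum.union_disjoint[OF fT fH d2])
    finally show "sum f V = sum f L + sum f T + sum f H" by (simp add: add.assoc)
  qed
  have cV: "card V = card L + card T + card H"
    using split[of "\<lambda>_. 1::nat"] by simp
  then show "card V = card L + card T + card H" .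
  have sL: "(\<Sum>v\<in>L. d v) = card L" by (simp add: L_def)
  have sT: "(\<Sum>v\<in>T. d v) = 2 * card T" by (simp add: T_def)
  have SH: "(\<Sum>v\<in>H. d v) = card L + 2 * card H + 2"
    using split[of d] sumd sL sT cV by simp
  then show "(\<Sum>v\<in>H. d v) = card L + 2 * card H + 2" .
  have SHr: "(\<Sum>v\<in>H. real (d v)) = real (card L) + 2 * real (card H) + 2"
    using SH by (metis (mono_tags) of_nat_add of_nat_mult of_nat_numeral of_nat_sum)
  have sumdr: "(\<Sum>v\<in>V. real (d v)) = 2 * real (card V) + 2"
    using sumd by (metis (mono_tags) of_nat_add of_nat_mult of_nat_numeral of_nat_sum)
  define p where "p = real (card L)"
  define k where "k = real (card T)"
  define h where "h = real (card H)"
  have rowL: "(\<Sum>y\<in>V. \<bar>real (d x) - real (d y)\<bar>) = p + k + h + 2" if "x \<in> L" for x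
  proof -
    have "(\<Sum>y\<in>V. \<bar>real (d x) - real (d y)\<bar>) = (\<Sum>y\<in>V. real (d y) - 1)"
      using that pos by (intro sum.cong) (auto simp: L_def)
    also have "\<dots> = 2 * real (card V) + 2 - real (card V)"
      by (simp add: sum_subtractf sumdr)
    finally show ?thesis using cV by (simp add: p_def k_def h_def)
  qed
  have rowT: "(\<Sum>y\<in>V. \<bar>real (d x) - real (d y)\<bar>) = 2 * p + 2" if "x \<in> T" for x
  proof -
    have "(\<Sum>y\<in>V. \<bar>real (d x) - real (d y)\<bar>) =
      (\<Sum>y\<in>L. \<bar>real (d x) - real (d y)\<bar>) + (\<Sum>y\<in>T. \<bar>real (d x) - real (d y)\<bar>)
      + (\<Sum>y\<in>H. \<bar>real (d x) - real (d y)\<bar>)" by (rule split)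
    also have "(\<Sum>y\<in>L. \<bar>real (d x) - real (d y)\<bar>) = (\<Sum>y\<in>L. 1)"
      using that by (intro sum.cong) (auto simp: L_def T_def)
    also have "(\<Sum>y\<in>T. \<bar>real (d x) - real (d y)\<bar>) = (\<Sum>y\<in>T. 0)"
      using that by (intro sum.cong) (auto simp: T_def)
    also have "(\<Sum>y\<in>H. \<bar>real (d x) - real (d y)\<bar>) = (\<Sum>y\<in>H. real (d y) - 2)"
      using that by (intro sum.cong) (auto simp: H_def T_def)
    also have "(\<Sum>y\<in>H. real (d y) - 2) = real (card L) + 2"
      by (simp add: sum_subtractf SHr)
    finally show ?thesis by (simp add: p_def)
  qed
  have rowH: "(\<Sum>y\<in>V. \<bar>real (d x) - real (d y)\<bar>) =
      p * (real (d x) - 1) + k * (real (d x) - 2) + (\<Sum>y\<in>H. \<bar>real (d x) - real (d y)\<bar>)"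
    if "x \<in> H" for x
  proof -
    have "(\<Sum>y\<in>V. \<bar>real (d x) - real (d y)\<bar>) =
      (\<Sum>y\<in>L. \<bar>real (d x) - real (d y)\<bar>) + (\<Sum>y\<in>T. \<bar>real (d x) - real (d y)\<bar>)
      + (\<Sum>y\<in>H. \<bar>real (d x) - real (d y)\<bar>)" by (rule split)
    also have "(\<Sum>y\<in>L. \<bar>real (d x) - real (d y)\<bar>) = (\<Sum>y\<in>L. real (d x) - 1)"
      using that by (intro sum.cong) (auto simp: L_def H_def)
    also have "(\<Sum>y\<in>T. \<bar>real (d x) - real (d y)\<bar>) = (\<Sum>y\<in>T. real (d x) - 2)"
      using that by (intro sum.cong) (auto simp: T_def H_def)
    finally show ?thesis by (simp add: p_def k_def)
  qed
  have "(\<Sum>x\<in>V. \<Sum>y\<in>V. \<bar>real (d x) - real (d y)\<bar>) =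
      (\<Sum>x\<in>L. \<Sum>y\<in>V. \<bar>real (d x) - real (d y)\<bar>) + (\<Sum>x\<in>T. \<Sum>y\<in>V. \<bar>real (d x) - real (d y)\<bar>)
      + (\<Sum>x\<in>H. \<Sum>y\<in>V. \<bar>real (d x) - real (d y)\<bar>)" by (rule split)
  also have "(\<Sum>x\<in>L. \<Sum>y\<in>V. \<bar>real (d x) - real (d y)\<bar>) = (\<Sum>x\<in>L. p + k + h + 2)"
    using rowL by (rule sum.cong[OF refl])
  also have "(\<Sum>x\<in>T. \<Sum>y\<in>V. \<bar>real (d x) - real (d y)\<bar>) = (\<Sum>x\<in>T. 2 * p + 2)"
    using rowT by (rule sum.cong[OF refl])
  also have "(\<Sum>x\<in>H. \<Sum>y\<in>V. \<bar>real (d x) - real (d y)\<bar>) =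
      (\<Sum>x\<in>H. p * (real (d x) - 1) + k * (real (d x) - 2) + (\<Sum>y\<in>H. \<bar>real (d x) - real (d y)\<bar>))"
    using rowH by (rule sum.cong[OF refl])
  also have "\<dots> = p * ((\<Sum>x\<in>H. real (d x)) - h) + k * ((\<Sum>x\<in>H. real (d x)) - 2 * h)
      + (\<Sum>x\<in>H. \<Sum>y\<in>H. \<bar>real (d x) - real (d y)\<bar>)"
    by (simp add: sum.distrib sum_subtractf sum_distrib_left h_def algebra_simps)
  finally show "(\<Sum>x\<in>V. \<Sum>y\<in>V. \<bar>real (d x) - real (d y)\<bar>) =
          2 * real (card L * card T + card L * (card L + card H + 2) + card T * (card L + 2))
          + (\<Sum>x\<in>H. \<Sum>y\<in>H. \<bar>real (d x) - real (d y)\<bar>)"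
    using SHr by (simp add: p_def k_def h_def algebra_simps)
qed


lemma ineq: fixes p k h :: nat
  assumes "2 \<le> p" "h \<le> p+2"
  shows "4*(p+k+h) < p*k + p*(p+h+2) + k*(p+2) + 10"
proof (cases "p \<ge> 4")
  case True
  have a: "4*k \<le> p*k" "4*h \<le> h*p" "4*p \<le> p*p" using True by simp_all
  have "4*(p+k+h) \<le> p*k + p*h + p*p" using add_mono[OF add_mono[OF a(1) a(2)] a(3)] by (simp add: algebra_simps)
  moreover have "p*k + p*h + p*p < p*k + p*(p+h+2) + k*(p+2) + 10" by (simp add: algebra_simps)
  ultimately show ?thesis by linarith
next
  case False
  then have "p = 2 \<or> p = 3" using assms by auto
  then show ?thesis using assms by (auto simp: algebra_simps)
qed

lemma all_eq:
  fixes d :: "'a \<Rightarrow> nat"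
  assumes "finite H" "\<forall>v\<in>H. m \<le> d v" "(\<Sum>v\<in>H. d v) = m * card H" "v \<in> H"
  shows "d v = m"
proof -
  have "(\<Sum>v\<in>H. d v - m) = (\<Sum>v\<in>H. d v) - (\<Sum>v\<in>H. m)"
    using assms(2) by (intro sum_subtractf_nat) auto
  also have "\<dots> = 0" using assms(3) by simp
  finally have "\<forall>v\<in>H. d v - m = 0" using assms(1) by simp
  then show ?thesis using assms(2,4) by force
qed

theorem theorem15:
  fixes V :: "'a set" and E :: "'a set set" and n :: nat
  assumes "n \<ge> 7" and "card V = n" and "bicyclic V E"
  defines "S1 \<equiv> replicate_mset 2 3 + replicate_mset (n - 2) (2::nat)"
      and "S2 \<equiv> replicate_mset 1 4 + replicate_mset (n - 1) (2::nat)"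
      and "S3 \<equiv> replicate_mset 3 3 + replicate_mset (n - 4) 2 + replicate_mset 1 (1::nat)"
  shows "(total_irr V E \<ge> 2 * real n - 4
         \<and> (total_irr V E = 2 * real n - 4 \<longleftrightarrow> degree_seq V E = S1))
       \<and> (degree_seq V E \<noteq> S1 \<longrightarrow>
           total_irr V E \<ge> 2 * real n - 2
         \<and> (total_irr V E = 2 * real n - 2 \<longleftrightarrow> degree_seq V E = S2))
       \<and> (degree_seq V E \<noteq> S1 \<longrightarrow> degree_seq V E \<noteq> S2 \<longrightarrow>
           total_irr V E \<ge> 4 * real n - 10
         \<and> (total_irr V E = 4 * real n - 10 \<longleftrightarrow> degree_seq V E = S3))"
proof -
  define d where "d = degree E"
  have fin: "finite V" using assms(3) unfolding bicyclic_def simple_graph_def by auto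
  have pos: "\<forall>v\<in>V. d v \<ge> 1" using degree_pos[OF assms(3)] assms(1,2) unfolding d_def by auto
  have sumd: "(\<Sum>v\<in>V. d v) = 2 * card V + 2"
    using handshake[OF fin] assms(3) unfolding bicyclic_def simple_graph_def d_def by auto
  define L where "L = {v\<in>V. d v = 1}"
  define T where "T = {v\<in>V. d v = 2}"
  define H where "H = {v\<in>V. d v \<ge> 3}"
  note cf = core_formula[OF fin pos sumd, folded L_def T_def H_def]
  define p where "p = card L"
  define k where "k = card T"
  define h where "h = card H"
  define HH where "HH = (\<Sum>x\<in>H. \<Sum>y\<in>H. \<bar>real (d x) - real (d y)\<bar>)"
  define A where "A = p * k + p * (p + h + 2) + k * (p + 2)"
  define I where "I = total_irr V E"
  define M where "M = degree_seq V E"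
  have nE: "n = p + k + h" using cf(1) assms(2) by (simp add: p_def k_def h_def)
  have SH: "(\<Sum>v\<in>H. d v) = p + 2 * h + 2" using cf(2) by (simp add: p_def h_def)
  have HH0: "HH \<ge> 0" unfolding HH_def by (simp add: sum_nonneg)
  have IE: "I = real A + HH / 2" unfolding I_def total_irr_def using cf(3)
    by (simp add: d_def[symmetric] A_def HH_def p_def k_def h_def)
  have fH: "finite H" using fin by (simp add: H_def)
  have h3: "3 * h \<le> p + 2 * h + 2"
  proof -
    have "(\<Sum>v\<in>H. 3) \<le> (\<Sum>v\<in>H. d v)" by (rule sum_mono) (simp add: H_def)
    then show ?thesis using SH by (simp add: h_def)
  qed
  have hpos: "h \<ge> 1"
  proof (rule ccontr)
    assume "\<not> h \<ge> 1" then have "card H = 0" by (simp add: h_def)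
    then have "H = {}" using fH by simp
    then show False using SH by simp
  qed
  have cnt: "count M x = card {v\<in>V. d v = x}" for x
    unfolding M_def degree_seq_def d_def by (rule count_degseq[OF fin])
  have c1: "count M 1 = p" using cnt[of 1] by (simp add: L_def p_def)
  have c2: "count M 2 = k" using cnt[of 2] by (simp add: T_def k_def)
  have uni: "M = replicate_mset x3 c + replicate_mset k 2 + replicate_mset p 1"
    if c3: "c \<ge> 3" and allc: "\<forall>v\<in>H. d v = c" and hc: "h = x3" for c x3
  proof -
    have "count M x = count (replicate_mset x3 c + replicate_mset k 2 + replicate_mset p 1) x" for x
    proof -
      have "count M x = (if x = 1 then p else if x = 2 then k else if x = c then h else 0)"
      proof -
        have e1: "{v\<in>V. d v = 1} = L" by (simp add: L_def)
        have e2: "{v\<in>V. d v = 2} = T" by (simp add: T_def)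
        have e3: "{v\<in>V. d v = c} = H"
        proof
          show "{v\<in>V. d v = c} \<subseteq> H" using c3 by (auto simp: H_def)
          show "H \<subseteq> {v\<in>V. d v = c}" using allc by (auto simp: H_def)
        qed
        have e4: "{v\<in>V. d v = x} = {}" if "x \<noteq> 1" "x \<noteq> 2" "x \<noteq> c"
        proof -
          have "False" if "v \<in> V" "d v = x" for v
          proof -
            have "d v \<ge> 3" using pos \<open>v \<in> V\<close> \<open>d v = x\<close> \<open>x \<noteq> 1\<close> \<open>x \<noteq> 2\<close> by force
            then have "v \<in> H" using \<open>v \<in> V\<close> by (simp add: H_def)
            then show False using allc \<open>d v = x\<close> \<open>x \<noteq> c\<close> by auto
          qed
          then show ?thesis by blast
        qed
        show ?thesis
        proof (cases "x = 1")
          case True then show ?thesis using cnt[of x] e1 by (simp add: p_def)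
        next
          case n1: False
          show ?thesis
          proof (cases "x = 2")
            case True then show ?thesis using cnt[of x] e2 by (simp add: k_def)
          next
            case n2: False
            show ?thesis
            proof (cases "x = c")
              case True then show ?thesis using cnt[of x] e3 n1 n2 by (simp add: h_def)
            next
              case False then show ?thesis using cnt[of x] e4[OF n1 n2 False] n1 n2 by simp
            qed
          qed
        qed
      qed
      then show ?thesis using c3 hc by simp
    qed
    then show ?thesis by (simp add: multiset_eq_iff)
  qed

  have HHz: "HH = 0" if "\<forall>v\<in>H. d v = c" for c using that by (simp add: HH_def)
  have all3: "\<forall>v\<in>H. d v = 3" if "p + 2 * h + 2 = 3 * h"
  proof
    fix v assume "v \<in> H"
    then show "d v = 3" using all_eq[OF fH, of 3 d v] SH that by (auto simp: H_def h_def)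
  qed
  have cS1: "count S1 1 = 0" "count S1 2 = n - 2" using assms(1) by (simp_all add: S1_def)
  have cS2: "count S2 1 = 0" "count S2 2 = n - 1" using assms(1) by (simp_all add: S2_def)
  have cS3: "count S3 1 = 1" "count S3 2 = n - 4" using assms(1) by (simp_all add: S3_def)
  have case1: "I = 2 * real n - 4 \<and> M = S1" if "p = 0" "h = 2"
  proof -
    have a3: "\<forall>v\<in>H. d v = 3" using all3 that by simp
    have "M = S1" using uni[OF _ a3 refl] that nE by (simp add: S1_def)
    moreover have "I = 2 * real n - 4" using IE HHz[OF a3] that nE by (simp add: A_def)
    ultimately show ?thesis by simp
  qed
  have case2: "I = 2 * real n - 2 \<and> M = S2" if p0h1: "p = 0" "h = 1"
  proof -
    obtain w where Hw: "H = {w}" using p0h1(2) unfolding h_def by (rule card_1_singletonE)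
    have a4: "\<forall>v\<in>H. d v = 4" using SH that Hw by simp
    have "M = S2" using uni[OF _ a4 refl] that nE by (simp add: S2_def)
    moreover have "I = 2 * real n - 2" using IE HHz[OF a4] that nE by (simp add: A_def)
    ultimately show ?thesis by simp
  qed
  have case3: "I = 4 * real n - 10 \<and> M = S3" if "p = 1" "h = 3"
  proof -
    have a3: "\<forall>v\<in>H. d v = 3" using all3 that by simp
    have "M = S3" using uni[OF _ a3 refl] that nE by (simp add: S3_def add.commute add.left_commute)
    moreover have "I = 4 * real n - 10" using IE HHz[OF a3] that nE by (simp add: A_def algebra_simps)
    ultimately show ?thesis by simp
  qed
  have case4: "I > 4 * real n - 10 \<and> M \<noteq> S1 \<and> M \<noteq> S2 \<and> M \<noteq> S3"
    if "\<not> (p = 0 \<and> h = 2)" "\<not> (p = 0 \<and> h = 1)" "\<not> (p = 1 \<and> h = 3)"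
  proof -
    have "M \<noteq> S1"
    proof
      assume "M = S1" then have "p = 0" "k = n - 2" using c1 c2 cS1 by auto
      then have "h = 2" using nE assms(1) by arith
      then show False using that(1) \<open>p = 0\<close> by simp
    qed
    moreover have "M \<noteq> S2"
    proof
      assume "M = S2" then have "p = 0" "k = n - 1" using c1 c2 cS2 by auto
      then have "h = 1" using nE assms(1) by arith
      then show False using that(2) \<open>p = 0\<close> by simp
    qed
    moreover have "M \<noteq> S3"
    proof
      assume "M = S3" then have "p = 1" "k = n - 4" using c1 c2 cS3 by auto
      then have "h = 3" using nE assms(1) by arith
      then show False using that(3) \<open>p = 1\<close> by simp
    qed
    moreover have "4 * n < A + 10"
    proof (cases "p \<ge> 2")
      case True
      have "h \<le> p + 2" using h3 by arith
      then show ?thesis using ineq[OF True, of h k] nE by (simp add: A_def)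
    next
      case False
      then have "p = 0 \<or> p = 1" by auto
      then show ?thesis
      proof
        assume "p = 0"
        then have "h \<le> 2" using h3 by arith
        then have "h = 1 \<or> h = 2" using hpos by arith
        then show ?thesis using that \<open>p = 0\<close> by blast
      next
        assume p1: "p = 1"
        then have "h \<le> 3" using h3 by arith
        then have "h < 3" using that(3) p1 by arith
        have "A = 4 * k + 3 + h" using p1 by (simp add: A_def)
        then show ?thesis using nE p1 \<open>h < 3\<close> by arith
      qed
    qed
    then have "real A > 4 * real n - 10" by linarith
    then have "I > 4 * real n - 10" using IE HH0 by linarith
    ultimately show ?thesis by simp
  qed
  have n7: "real n \<ge> 7" using assms(1) by simp
  have S12: "S1 \<noteq> S2"
  proof
    assume "S1 = S2" then have "n - 2 = n - 1" using cS1(2) cS2(2) by simp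
    then show False using assms(1) by arith
  qed
  have S13: "S1 \<noteq> S3" using cS1(1) cS3(1) by auto
  have S23: "S2 \<noteq> S3" using cS2(1) cS3(1) by auto
  have "(I \<ge> 2 * real n - 4
         \<and> (I = 2 * real n - 4 \<longleftrightarrow> M = S1))
       \<and> (M \<noteq> S1 \<longrightarrow>
           I \<ge> 2 * real n - 2
         \<and> (I = 2 * real n - 2 \<longleftrightarrow> M = S2))
       \<and> (M \<noteq> S1 \<longrightarrow> M \<noteq> S2 \<longrightarrow>
           I \<ge> 4 * real n - 10
         \<and> (I = 4 * real n - 10 \<longleftrightarrow> M = S3))"
  proof (cases "p = 0 \<and> h = 2")
    case True
    then have e: "I = 2 * real n - 4" "M = S1" using case1 by auto
    show ?thesis unfolding e using S12 S13 by simp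
  next
    case F1: False
    show ?thesis
    proof (cases "p = 0 \<and> h = 1")
      case True
      then have e: "I = 2 * real n - 2" "M = S2" using case2 by auto
      have "S2 \<noteq> S1" "S2 \<noteq> S3" using S12 S23 by auto
      then show ?thesis unfolding e by simp
    next
      case F2: False
      show ?thesis
      proof (cases "p = 1 \<and> h = 3")
        case True
        then have e: "I = 4 * real n - 10" "M = S3" using case3 by auto
        have "4 * real n - 10 > 2 * real n - 2" using n7 by linarith
        moreover have "S3 \<noteq> S1" "S3 \<noteq> S2" using S13 S23 by auto
        ultimately show ?thesis unfolding e by simp
      next
        case False
        then have e: "I > 4 * real n - 10" "M \<noteq> S1" "M \<noteq> S2" "M \<noteq> S3" using case4 F1 F2 by auto
        have "I > 2 * real n - 2" using e(1) n7 by linarith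
        moreover have "I \<noteq> 4 * real n - 10" "I \<noteq> 2 * real n - 2" "I \<noteq> 2 * real n - 4"
          "I \<ge> 4 * real n - 10" "I \<ge> 2 * real n - 2" "I \<ge> 2 * real n - 4"
          using e(1) n7 by linarith+
        ultimately show ?thesis using e(2-4) by simp
      qed
    qed
  qed
  then show ?thesis unfolding I_def M_def .
qed

end
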